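(* Let $\widehat{A}=A+\epsilon B$ and $\widehat{C}=C+\epsilon D$ with $A,B,C,D\in\mathbb{R}^{n\times n}$ be such that the dual Drazin generalized inverses of $\widehat{A}$, $\widehat{C}$ and $\widehat{A}\widehat{C}$ exist and have the particular form $\widehat{A}^{D}=A^{D}-\epsilon A^{D}BA^{D}$, $\widehat{C}^{D}=C^{D}-\epsilon C^{D}DC^{D}$, $(\widehat{A}\widehat{C})^{D}=(AC)^{D}-\epsilon (AC)^{D}(AD+BC)(AC)^{D}$. If $AC=CA$, $C^{D}B=BC^{D}$ and $A^{D}D=DA^{D}$, then $(\widehat{A}\widehat{C})^{D}=\widehat{A}^{D}\widehat{C}^{D}=\widehat{C}^{D}\widehat{A}^{D}$.
   Context: A dual number is $a+\epsilon b$ with $a,b\in\mathbb{R}$, where $\epsilon\neq 0$, $\epsilon^2=0$ and $\epsilon$ commutes with reals. A dual matrix is $A+\epsilon B$ with $A,B$ real; sums and products are computed formally using $\epsilon^2=0$, and equality means equality of real and dual parts. $\mathbb{D}^n$ is the set of dual column vectors of length $n$; the dual index $Ind(\widehat{A})$ of a square dual matrix is the smallest nonnegative integer $k$ with $\{\widehat{A}^k\widehat{z}:\widehat{z}\in\mathbb{D}^n\}=\{\widehat{A}^{k+1}\widehat{z}:\widehat{z}\in\mathbb{D}^n\}$. $A^D$ denotes the Drazin inverse of a real square matrix $A$. For $Ind(\widehat{A})=k$, the dual Drazin generalized inverse $\widehat{A}^D$ is the dual matrix $\widehat{X}$ (if it exists) with $\widehat{A}^{k}\widehat{X}\widehat{A}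 = \widehat{A}^{k}$, $\widehat{X}\widehat{A}\widehat{X} = \widehat{X}$, $\widehat{A}\widehat{X} =\widehat{X}\widehat{A}$. *)

theory Defs
  imports "HOL-Analysis.Analysis"
begin

definition mpow :: "real^('n::finite)^'n \<Rightarrow> nat \<Rightarrow> real^'n^'n" where
  "mpow A k = (((**) A) ^^ k) (mat 1)"

definition rindex :: "real^('n::finite)^'n \<Rightarrow> nat" where
  "rindex A = (LEAST k. range (\<lambda>z. mpow A k *v z) = range (\<lambda>z. mpow A (Suc k) *v z))"

definition is_drazin :: "real^('n::finite)^'n \<Rightarrow> real^'n^'n \<Rightarrow> bool" where
  "is_drazin A X \<longleftrightarrow>
     mpow A (rindex A) ** X ** A = mpow A (rindex A) \<and> X ** A ** X = X \<and> A ** X = X ** A"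

text \<open>The Drazin inverse A^D (it exists and is unique for every real square matrix).\<close>
definition drazin :: "real^('n::finite)^'n \<Rightarrow> real^'n^'n" where
  "drazin A = (THE X. is_drazin A X)"

section \<open>Dual matrices A + eps B, represented as pairs (A, B)\<close>

type_synonym 'n dmat = "(real^'n^'n) \<times> (real^'n^'n)"
type_synonym 'n dvec = "(real^'n) \<times> (real^'n)"

definition dmult :: "('n::finite) dmat \<Rightarrow> 'n dmat \<Rightarrow> 'n dmat" where
  "dmult P Q = (fst P ** fst Q, fst P ** snd Q + snd P ** fst Q)"

definition dmv :: "('n::finite) dmat \<Rightarrow> ('n::finite) dvec \<Rightarrow> 'n dvec" where
  "dmv P z = (fst P *v fst z, fst P *v snd z + snd P *v fst z)"

definition done_id :: "('n::finite) dmat" where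
  "done_id = (mat 1, 0)"

definition dpow :: "('n::finite) dmat \<Rightarrow> nat \<Rightarrow> 'n dmat" where
  "dpow P k = ((dmult P) ^^ k) done_id"

definition dindex :: "('n::finite) dmat \<Rightarrow> nat" where
  "dindex P = (LEAST k. range (dmv (dpow P k)) = range (dmv (dpow P (Suc k))))"

definition is_ddrazin :: "('n::finite) dmat \<Rightarrow> 'n dmat \<Rightarrow> bool" where
  "is_ddrazin P X \<longleftrightarrow>
     dmult (dmult (dpow P (dindex P)) X) P = dpow P (dindex P) \<and>
     dmult (dmult X P) X = X \<and> dmult P X = dmult X P"

end

theory Submission
  imports Defs
begin

lemma mm_lneg: "(- (A::real^'n^'m)) ** (B::real^'p^'n) = - (A ** B)"
  by (vector matrix_matrix_mult_def sum_negf)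

lemma mm_rneg: "(A::real^'n^'m) ** (- (B::real^'p^'n)) = - (A ** B)"
  by (vector matrix_matrix_mult_def sum_negf)

lemma mm_rdistrib: "((A::real^'n^'m) + B) ** (C::real^'p^'n) = (A ** C) + (B ** C)"
  by (vector matrix_matrix_mult_def sum.distrib[symmetric] field_simps)

lemma mpow_0[simp]: "mpow A 0 = mat 1"
  by (simp add: mpow_def)

lemma mpow_Suc: "mpow A (Suc k) = A ** mpow A k"
  by (simp add: mpow_def)

lemma mpow_comm: "A ** X = X ** A \<Longrightarrow> mpow A k ** X = X ** mpow A k"
proof (induction k)
  case 0 then show ?case by simp
next
  case (Suc k)
  have "mpow A (Suc k) ** X = A ** (mpow A k ** X)" by (simp add: mpow_Suc matrix_mul_assoc)
  also have "\<dots> = (A ** X) ** mpow A k" using Suc by (simp add: matrix_mul_assoc)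
  also have "\<dots> = X ** mpow A (Suc k)" using Suc.prems by (simp add: mpow_Suc matrix_mul_assoc)
  finally show ?case .
qed

lemma mpow_Suc': "mpow A (Suc k) = mpow A k ** A"
  by (simp add: mpow_Suc mpow_comm)

lemma mpow_add: "mpow A (k + m) = mpow A k ** mpow A m"
  by (induction k) (simp_all add: mpow_Suc matrix_mul_assoc)

lemma mpow_mult: "A ** C = C ** A \<Longrightarrow> mpow (A ** C) k = mpow A k ** mpow C k"
proof (induction k)
  case 0 then show ?case by simp
next
  case (Suc k)
  have cc: "mpow A k ** C = C ** mpow A k" using mpow_comm Suc.prems by metis
  have "mpow (A ** C) (Suc k) = A ** C ** (mpow A k ** mpow C k)" using Suc by (simp add: mpow_Suc)
  also have "\<dots> = A ** (C ** mpow A k) ** mpow C k" by (simp add: matrix_mul_assoc)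
  also have "\<dots> = A ** (mpow A k ** C) ** mpow C k" using cc by simp
  also have "\<dots> = mpow A (Suc k) ** mpow C (Suc k)" by (simp add: mpow_Suc matrix_mul_assoc)
  finally show ?case .
qed

definition dz :: "real^('n::finite)^'n \<Rightarrow> real^'n^'n \<Rightarrow> nat \<Rightarrow> bool" where
  "dz A X k \<longleftrightarrow> mpow A k ** X ** A = mpow A k \<and> X ** A ** X = X \<and> A ** X = X ** A"

lemma dz_raise: assumes "dz A X k" shows "dz A X (k + m)"
proof -
  have "mpow A (k + m) ** X ** A = mpow A m ** (mpow A k ** X ** A)"
    by (simp add: mpow_add add.commute[of k m] matrix_mul_assoc)
  also have "\<dots> = mpow A (k + m)" using assms by (simp add: dz_def mpow_add add.commute[of k m])
  finally show ?thesis using assms by (simp add: dz_def)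
qed

lemma dz_left: assumes "dz A X k" shows "\<exists>Z. X = Z ** mpow A k"
proof (induction k)
  case 0 show ?case by (rule exI[of _ X]) simp
next
  case (Suc k)
  then obtain Z where Z: "X = Z ** mpow A k" by blast
  have "X = X ** A ** X" using assms by (simp add: dz_def)
  also have "\<dots> = X ** X ** A" using assms unfolding dz_def by (metis matrix_mul_assoc)
  also have "\<dots> = (X ** Z) ** mpow A (Suc k)"
    by (subst (2) Z) (simp add: mpow_Suc' matrix_mul_assoc)
  finally show ?case by blast
qed

lemma dz_right: assumes "dz A X k" shows "\<exists>W. X = mpow A k ** W"
proof (induction k)
  case 0 show ?case by (rule exI[of _ X]) simp
next
  case (Suc k)
  then obtain W where W: "X = mpow A k ** W" by blast
  have "X = X ** A ** X" using assms by (simp add: dz_def)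
  also have "\<dots> = A ** X ** X" using assms by (simp add: dz_def)
  also have "\<dots> = mpow A (Suc k) ** (W ** X)"
    by (subst (1) W) (simp add: mpow_Suc matrix_mul_assoc)
  finally show ?case by blast
qed

lemma dz_PA: assumes "dz A X k" shows "X ** A ** mpow A k = mpow A k"
proof -
  have c: "mpow A k ** X = X ** mpow A k" using assms mpow_comm by (metis dz_def)
  have "X ** A ** mpow A k = X ** mpow A k ** A" by (metis mpow_Suc mpow_Suc' matrix_mul_assoc)
  also have "\<dots> = mpow A k" using assms c by (simp add: dz_def)
  finally show ?thesis .
qed

lemma dz_unique: assumes X: "dz A X k" and Y: "dz A Y k" shows "X = Y"
proof -
  obtain Z where Z: "X = Z ** mpow A k" using dz_left[OF X] by blast
  obtain W where W: "Y = mpow A k ** W" using dz_right[OF Y] by blast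
  have AY: "A ** Y = Y ** A" using Y by (simp add: dz_def)
  have YE: "mpow A k ** Y ** A = mpow A k" using Y by (simp add: dz_def)
  have "X = Z ** (mpow A k ** Y ** A)" using Z YE by simp
  also have "\<dots> = Z ** (mpow A k ** A ** Y)" using AY by (metis matrix_mul_assoc)
  also have "\<dots> = X ** A ** Y" using Z by (simp add: matrix_mul_assoc)
  finally have 1: "X = X ** A ** Y" .
  have "Y = X ** A ** mpow A k ** W" using W dz_PA[OF X] by simp
  also have "\<dots> = X ** A ** Y" using W by (simp add: matrix_mul_assoc)
  finally show ?thesis using 1 by simp
qed

lemma dz_comm: assumes X: "dz A X k" and AC: "A ** C = C ** A" shows "X ** C = C ** X"
proof -
  obtain Z where Z: "X = Z ** mpow A k" using dz_left[OF X] by blast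
  obtain W where W: "X = mpow A k ** W" using dz_right[OF X] by blast
  have AX: "A ** X = X ** A" and XAX: "X ** A ** X = X" and E: "mpow A k ** X ** A = mpow A k"
    using X by (auto simp: dz_def)
  have ck: "mpow A k ** C = C ** mpow A k" using AC mpow_comm by metis
  have e1: "mpow A k = mpow A k ** A ** X" using E AX by (metis matrix_mul_assoc)
  have e2: "mpow A k = X ** A ** mpow A k" using dz_PA[OF X] by simp
  have "X ** C = Z ** (C ** mpow A k)" using Z ck by (metis matrix_mul_assoc)
  also have "\<dots> = Z ** (C ** (mpow A k ** A ** X))" using e1 by simp
  also have "\<dots> = Z ** ((C ** mpow A k) ** A ** X)" by (simp add: matrix_mul_assoc)
  also have "\<dots> = Z ** mpow A k ** (C ** A) ** X" unfolding ck[symmetric] by (simp add: matrix_mul_assoc)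
  also have "\<dots> = X ** (C ** A) ** X" unfolding Z[symmetric] ..
  also have "\<dots> = X ** A ** C ** X" by (metis AC matrix_mul_assoc)
  finally have 1: "X ** C = X ** A ** C ** X" .
  have "C ** X = (C ** mpow A k) ** W" using W by (simp add: matrix_mul_assoc)
  also have "\<dots> = ((X ** A ** mpow A k) ** C) ** W" using e2 ck by simp
  also have "\<dots> = X ** A ** (mpow A k ** C) ** W" by (simp add: matrix_mul_assoc)
  also have "\<dots> = X ** A ** (C ** mpow A k) ** W" unfolding ck ..
  also have "\<dots> = X ** (A ** C) ** (mpow A k ** W)" by (simp add: matrix_mul_assoc)
  also have "\<dots> = X ** (C ** A) ** X" unfolding W[symmetric] AC ..
  also have "\<dots> = X ** C ** A ** X" by (simp add: matrix_mul_assoc)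
  finally have 2: "C ** X = X ** C ** A ** X" .
  have "X ** C = X ** A ** (C ** X)" using 1 by (simp add: matrix_mul_assoc)
  also have "\<dots> = (X ** A ** X) ** C ** A ** X" using 2 by (simp add: matrix_mul_assoc)
  also have "\<dots> = C ** X" using XAX 2 by simp
  finally show ?thesis .
qed

lemma dz_prod:
  assumes X: "dz A X k" and Y: "dz C Y k" and AC: "A ** C = C ** A"
    and XC: "X ** C = C ** X" and YA: "Y ** A = A ** Y" and XY: "X ** Y = Y ** X"
  shows "dz (A ** C) (X ** Y) k"
proof -
  have AX: "A ** X = X ** A" and XAX: "X ** A ** X = X" and EA: "mpow A k ** X ** A = mpow A k"
    using X by (auto simp: dz_def)
  have CY: "C ** Y = Y ** C" and YCY: "Y ** C ** Y = Y" and EC: "mpow C k ** Y ** C = mpow C k"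
    using Y by (auto simp: dz_def)
  have m1: "mpow C k ** X = X ** mpow C k" using mpow_comm XC by metis
  have m2: "mpow C k ** A = A ** mpow C k" using mpow_comm AC by metis
  have "mpow (A ** C) k ** (X ** Y) ** (A ** C) = mpow A k ** (mpow C k ** X) ** Y ** A ** C"
    using mpow_mult[OF AC] by (simp add: matrix_mul_assoc)
  also have "\<dots> = mpow A k ** X ** mpow C k ** (Y ** A) ** C"
    by (metis m1 matrix_mul_assoc)
  also have "\<dots> = mpow A k ** X ** (mpow C k ** A) ** Y ** C"
    by (metis YA matrix_mul_assoc)
  also have "\<dots> = (mpow A k ** X ** A) ** (mpow C k ** Y ** C)"
    by (metis m2 matrix_mul_assoc)
  also have "\<dots> = mpow (A ** C) k" using EA EC mpow_mult[OF AC] by simp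
  finally have 1: "mpow (A ** C) k ** (X ** Y) ** (A ** C) = mpow (A ** C) k" .
  have "X ** Y ** (A ** C) ** (X ** Y) = X ** (Y ** A) ** (C ** X) ** Y"
    by (simp add: matrix_mul_assoc)
  also have "\<dots> = X ** (A ** Y) ** (X ** C) ** Y" by (metis YA XC)
  also have "\<dots> = X ** A ** (Y ** X) ** C ** Y" by (simp add: matrix_mul_assoc)
  also have "\<dots> = X ** A ** (X ** Y) ** C ** Y" by (metis XY)
  also have "\<dots> = (X ** A ** X) ** (Y ** C ** Y)" by (simp add: matrix_mul_assoc)
  also have "\<dots> = X ** Y" using XAX YCY by simp
  finally have 2: "X ** Y ** (A ** C) ** (X ** Y) = X ** Y" .
  have "A ** C ** (X ** Y) = A ** (C ** X) ** Y" by (simp add: matrix_mul_assoc)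
  also have "\<dots> = A ** (X ** C) ** Y" by (metis XC)
  also have "\<dots> = (A ** X) ** (C ** Y)" by (simp add: matrix_mul_assoc)
  also have "\<dots> = (X ** A) ** (Y ** C)" by (metis AX CY)
  also have "\<dots> = X ** (A ** Y) ** C" by (simp add: matrix_mul_assoc)
  also have "\<dots> = X ** (Y ** A) ** C" by (metis YA)
  also have "\<dots> = X ** Y ** (A ** C)" by (simp add: matrix_mul_assoc)
  finally have 3: "A ** C ** (X ** Y) = X ** Y ** (A ** C)" .
  show ?thesis using 1 2 3 by (simp add: dz_def)
qed

lemma fst_dpow: "fst (dpow P k) = mpow (fst P) k"
  by (induction k) (simp_all add: dpow_def done_id_def mpow_Suc dmult_def)

lemma ddz_dz: assumes "is_ddrazin P X" shows "dz (fst P) (fst X) (dindex P)"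
proof -
  have a: "fst (dmult (dmult (dpow P (dindex P)) X) P) = fst (dpow P (dindex P))"
    and b: "fst (dmult (dmult X P) X) = fst X" and c: "fst (dmult P X) = fst (dmult X P)"
    using assms unfolding is_ddrazin_def by auto
  show ?thesis using a b c by (simp add: dz_def dmult_def fst_dpow)
qed

theorem mainTheorem7:
  fixes A B C D :: "real^('n::finite)^'n"
  assumes hA: "is_ddrazin (A, B) (drazin A, - (drazin A ** B ** drazin A))"
      and hC: "is_ddrazin (C, D) (drazin C, - (drazin C ** D ** drazin C))"
      and hAC: "is_ddrazin (dmult (A, B) (C, D))
                  (drazin (A ** C), - (drazin (A ** C) ** (A ** D + B ** C) ** drazin (A ** C)))"
      and comm1: "A ** C = C ** A"
      and comm2: "drazin C ** B = B ** drazin C"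
      and comm3: "drazin A ** D = D ** drazin A"
  shows "(drazin (A ** C), - (drazin (A ** C) ** (A ** D + B ** C) ** drazin (A ** C)))
           = dmult (drazin A, - (drazin A ** B ** drazin A)) (drazin C, - (drazin C ** D ** drazin C))
       \<and> dmult (drazin A, - (drazin A ** B ** drazin A)) (drazin C, - (drazin C ** D ** drazin C))
           = dmult (drazin C, - (drazin C ** D ** drazin C)) (drazin A, - (drazin A ** B ** drazin A))"
proof -
  define XA where "XA = drazin A"
  define XC where "XC = drazin C"
  define XP where "XP = drazin (A ** C)"
  define kA where "kA = dindex (A, B)"
  define kC where "kC = dindex (C, D)"
  define kP where "kP = dindex (dmult (A, B) (C, D))"
  define K where "K = kA + kC + kP"
  have dA0: "dz A XA kA" using ddz_dz[OF hA] unfolding XA_def kA_def by simp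
  have dC0: "dz C XC kC" using ddz_dz[OF hC] unfolding XC_def kC_def by simp
  have dP0: "dz (A ** C) XP kP" using ddz_dz[OF hAC] unfolding XP_def kP_def by (simp add: dmult_def)
  have dA: "dz A XA K" using dz_raise[OF dA0, of "kC + kP"] unfolding K_def by (simp add: add.assoc)
  have dC: "dz C XC K" using dz_raise[OF dC0, of "kA + kP"] unfolding K_def by (simp add: ac_simps)
  have dP: "dz (A ** C) XP K" using dz_raise[OF dP0, of "kA + kC"] unfolding K_def by (simp add: ac_simps)
  have cAC: "XA ** C = C ** XA" using dz_comm[OF dA comm1] .
  have cCA: "XC ** A = A ** XC" using dz_comm[OF dC comm1[symmetric]] .
  have cXX: "XA ** XC = XC ** XA" using dz_comm[OF dA cCA[symmetric]] .
  have XAX: "XA ** A ** XA = XA" using dA by (simp add: dz_def)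
  have XCX: "XC ** C ** XC = XC" using dC by (simp add: dz_def)
  have c2: "XC ** B = B ** XC" using comm2 unfolding XC_def .
  have c3: "XA ** D = D ** XA" using comm3 unfolding XA_def .
  have P: "XP = XA ** XC"
    using dz_unique[OF dP dz_prod[OF dA dC comm1 cAC cCA cXX]] .
  have T1: "XA ** XC ** (A ** D) ** (XA ** XC) = XA ** (XC ** D ** XC)"
  proof -
    have "XA ** XC ** (A ** D) ** (XA ** XC) = XA ** (XC ** A) ** D ** XA ** XC"
      by (simp add: matrix_mul_assoc)
    also have "\<dots> = XA ** A ** XC ** (D ** XA) ** XC" by (metis cCA matrix_mul_assoc)
    also have "\<dots> = XA ** A ** (XC ** XA) ** D ** XC" by (metis c3 matrix_mul_assoc)
    also have "\<dots> = (XA ** A ** XA) ** (XC ** D ** XC)" by (metis cXX matrix_mul_assoc)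
    also have "\<dots> = XA ** (XC ** D ** XC)" using XAX by simp
    finally show ?thesis .
  qed
  have T2: "XA ** XC ** (B ** C) ** (XA ** XC) = XA ** B ** XA ** XC"
  proof -
    have "XA ** XC ** (B ** C) ** (XA ** XC) = XA ** (XC ** B) ** C ** XA ** XC"
      by (simp add: matrix_mul_assoc)
    also have "\<dots> = XA ** B ** XC ** (C ** XA) ** XC" by (metis c2 matrix_mul_assoc)
    also have "\<dots> = XA ** B ** (XC ** XA) ** C ** XC" by (metis cAC matrix_mul_assoc)
    also have "\<dots> = (XA ** B ** XA) ** (XC ** C ** XC)" by (metis cXX matrix_mul_assoc)
    also have "\<dots> = XA ** B ** XA ** XC" using XCX by (simp add: matrix_mul_assoc)
    finally show ?thesis .
  qed
  have S1: "XC ** (XA ** B ** XA) = XA ** B ** XA ** XC"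
  proof -
    have "XC ** (XA ** B ** XA) = XA ** (XC ** B) ** XA" by (metis cXX matrix_mul_assoc)
    also have "\<dots> = XA ** B ** (XC ** XA)" by (metis c2 matrix_mul_assoc)
    also have "\<dots> = XA ** B ** XA ** XC" by (metis cXX matrix_mul_assoc)
    finally show ?thesis .
  qed
  have S2: "XC ** D ** XC ** XA = XA ** (XC ** D ** XC)"
  proof -
    have "XC ** D ** XC ** XA = XC ** (D ** XA) ** XC" by (metis cXX matrix_mul_assoc)
    also have "\<dots> = (XC ** XA) ** D ** XC" by (metis c3 matrix_mul_assoc)
    also have "\<dots> = XA ** (XC ** D ** XC)" by (metis cXX matrix_mul_assoc)
    finally show ?thesis .
  qed
  have E1: "- (XP ** (A ** D + B ** C) ** XP) = XA ** (- (XC ** D ** XC)) + (- (XA ** B ** XA)) ** XC"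
    unfolding P by (simp add: matrix_add_ldistrib mm_rdistrib mm_lneg mm_rneg T1 T2)
  have E2: "XA ** (- (XC ** D ** XC)) + (- (XA ** B ** XA)) ** XC
          = XC ** (- (XA ** B ** XA)) + (- (XC ** D ** XC)) ** XA"
    by (simp add: mm_lneg mm_rneg S1 S2)
  show ?thesis
    unfolding XA_def[symmetric] XC_def[symmetric] XP_def[symmetric]
    using P E1 E2 cXX by (simp add: dmult_def)
qed

end
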